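(* Let $n\ge 1$, let $\mu_1,\ldots,\mu_n$ be continuous probability measures on $\mathbb{R}^n$ and let $\alpha_1,\ldots,\alpha_n\in[0,1]$. Let $f_1,\ldots,f_n:S^{n-1}\to\mathbb{R}^n$ be functions (not necessarily continuous) such that $\mu_i\big(H^+_{v,\langle v,f_i(v)\rangle}\big)=\alpha_i$ for all $i\in[n]$ and all $v\in S^{n-1}$, and such that each image $\operatorname{Im} f_i$ is bounded. If $\operatorname{Im} f_1,\ldots,\operatorname{Im} f_n$ can be separated by hyperplanes, then there exists an oriented hyperplane $H$ such that $\mu_i(H^+)=\alpha_i$ for all $i\in[n]$.
   Context: A continuous probability measure on $\mathbb{R}^n$ is a Borel probability measure that is absolutely continuous with respect to Lebesgue measure. For $v\in\mathbb{R}^n\setminus\{0\}$ and $\lambda\in\mathbb{R}$, $H_{v,\lambda}=\{x:\langle x,v\rangle=\lambda\}$, $H^+_{v,\lambda}=\{x:\langle x,v\rangle\ge\lambda\}$, $H^-_{v,\lambda}=\{x:\langle x,v\rangle\le\lambda\}$; for an oriented hyperplane $H$, $H^+$ is the closed half-space in the direction of its normal. Sets $S_1,\ldots,S_n\subset\mathbb{R}^n$ can be separated by hyperplanes if for every function $\sigma:[n]\to\{-1,+1\}$ there is a hyperplane $H$ such that for every $i$, $S_i$ is contained in the open half-space $\operatorname{int} H^{\sigma(i)}$ (where $H^{+1}=H^+$, $H^{-1}=H^-$). $[n]=\{1,\ldots,n\}$. *)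

theory Defs
  imports "HOL-Probability.Probability"
begin

definition halfspace_plus :: "'a::real_inner \<Rightarrow> real \<Rightarrow> 'a set" where
  "halfspace_plus v l = {x. inner x v \<ge> l}"

definition halfspace_minus :: "'a::real_inner \<Rightarrow> real \<Rightarrow> 'a set" where
  "halfspace_minus v l = {x. inner x v \<le> l}"

definition continuous_prob_measure :: "'a::euclidean_space measure \<Rightarrow> bool" where
  "continuous_prob_measure M \<longleftrightarrow>
     sets M = sets borel \<and> prob_space M \<and> absolutely_continuous lborel M"

text \<open>Sets S i (i ranging over the index type 'n, i.e. [n]) can be separated by
  hyperplanes: for every sign pattern sigma (True = +1, False = -1) there is a
  hyperplane H_{v,l} (v nonzero) with each S i inside the interior of H^{sigma(i)}.\<close>
definition separable_by_hyperplanes :: "('n \<Rightarrow> 'a::real_inner set) \<Rightarrow> bool" where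
  "separable_by_hyperplanes S \<longleftrightarrow>
     (\<forall>\<sigma> :: 'n \<Rightarrow> bool. \<exists>v l. v \<noteq> 0 \<and>
        (\<forall>i. S i \<subseteq> interior (if \<sigma> i then halfspace_plus v l else halfspace_minus v l)))"

end

theory Submission
  imports Defs
begin


lemma hs_scale:
  fixes v :: "'a::real_inner"
  assumes "c > 0"
  shows "halfspace_plus (c *\<^sub>R v) (c * l) = halfspace_plus v l"
  using assms by (auto simp: halfspace_plus_def)

lemma hs_closed: "closed (halfspace_plus (v::'a::real_inner) l)"
  unfolding halfspace_plus_def by (intro closed_Collect_le continuous_intros)

lemma hs_sets:
  fixes M :: "'a::euclidean_space measure"
  assumes "continuous_prob_measure M"
  shows "halfspace_plus v l \<in> sets M"
  using assms borel_closed[OF hs_closed[of v l]] unfolding continuous_prob_measure_def by auto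

lemma hs_mono:
  fixes M :: "'a::euclidean_space measure"
  assumes "continuous_prob_measure M" "l \<le> l'"
  shows "measure M (halfspace_plus v l') \<le> measure M (halfspace_plus v l)"
proof -
  interpret prob_space M using assms unfolding continuous_prob_measure_def by auto
  show ?thesis
    by (rule finite_measure_mono) (use assms hs_sets in \<open>auto simp: halfspace_plus_def\<close>)
qed

lemma hyperplane_null:
  fixes M :: "'a::euclidean_space measure"
  assumes "continuous_prob_measure M" "v \<noteq> 0"
  shows "{x. inner x v = l} \<in> null_sets M"
proof -
  have "negligible {x. v \<bullet> x = l}" using negligible_hyperplane assms(2) by blast
  then have "{x. v \<bullet> x = l} \<in> null_sets lebesgue" using negligible_iff_null_sets by blast
  moreover have "{x. v \<bullet> x = l} \<in> sets lborel"
    by (simp add: borel_closed closed_hyperplane)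
  ultimately have "{x. v \<bullet> x = l} \<in> null_sets lborel"
    using null_sets_completion_iff by blast
  then show ?thesis using assms(1) unfolding continuous_prob_measure_def absolutely_continuous_def
    by (auto simp: inner_commute)
qed

lemma hs_cont:
  fixes M :: "'a::euclidean_space measure"
  assumes M: "continuous_prob_measure M" and v: "v \<noteq> 0"
    and vs: "vs \<longlonglongrightarrow> v" and ls: "ls \<longlonglongrightarrow> l"
  shows "(\<lambda>k. measure M (halfspace_plus (vs k) (ls k))) \<longlonglongrightarrow> measure M (halfspace_plus v l)"
proof -
  interpret prob_space M using assms unfolding continuous_prob_measure_def by auto
  have sp: "space M = UNIV" using M unfolding continuous_prob_measure_def
    by (metis sets_eq_imp_space_eq space_borel)
  have "(\<lambda>k. integral\<^sup>L M (indicator (halfspace_plus (vs k) (ls k)) :: _ \<Rightarrow> real))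
        \<longlonglongrightarrow> integral\<^sup>L M (indicator (halfspace_plus v l))"
  proof (rule integral_dominated_convergence[where w="\<lambda>_. 1"])
    show "indicator (halfspace_plus v l) \<in> borel_measurable M"
      using hs_sets[OF M] by (rule borel_measurable_indicator)
    show "\<And>k. indicator (halfspace_plus (vs k) (ls k)) \<in> borel_measurable M"
      using hs_sets[OF M] by (rule borel_measurable_indicator)
    show "integrable M (\<lambda>_. 1::real)" by simp
    show "\<And>k. AE x in M. norm (indicator (halfspace_plus (vs k) (ls k)) x :: real) \<le> 1"
      by (auto simp: indicator_def)
    have "AE x in M. x \<notin> {x. inner x v = l}"
      by (rule AE_not_in[OF hyperplane_null[OF M v]])
    then show "AE x in M. (\<lambda>k. indicator (halfspace_plus (vs k) (ls k)) x :: real)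
                 \<longlonglongrightarrow> indicator (halfspace_plus v l) x"
    proof (rule AE_mp, intro AE_I2 impI)
      fix x assume "x \<notin> {x. inner x v = l}"
      then have ne: "inner x v \<noteq> l" by simp
      have t: "(\<lambda>k. inner x (vs k) - ls k) \<longlonglongrightarrow> inner x v - l"
        by (intro tendsto_intros vs ls)
      show "(\<lambda>k. indicator (halfspace_plus (vs k) (ls k)) x :: real)
                 \<longlonglongrightarrow> indicator (halfspace_plus v l) x"
      proof (cases "inner x v > l")
        case True
        then have "eventually (\<lambda>k. inner x (vs k) - ls k > 0) sequentially"
          using order_tendstoD(1)[OF t, of 0] by simp
        then have "eventually (\<lambda>k. indicator (halfspace_plus (vs k) (ls k)) x = (1::real)) sequentially"
          by eventually_elim (auto simp: halfspace_plus_def indicator_def)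
        then show ?thesis using True
          by (simp add: halfspace_plus_def indicator_def tendsto_eventually)
      next
        case False
        then have F: "inner x v < l" using ne by simp
        then have "eventually (\<lambda>k. inner x (vs k) - ls k < 0) sequentially"
          using order_tendstoD(2)[OF t, of 0] by simp
        then have "eventually (\<lambda>k. indicator (halfspace_plus (vs k) (ls k)) x = (0::real)) sequentially"
          by eventually_elim (auto simp: halfspace_plus_def indicator_def)
        then show ?thesis using F
          by (simp add: halfspace_plus_def indicator_def tendsto_eventually)
      qed
    qed
  qed
  then show ?thesis using sp by simp
qed



definition Mrow :: "'n::finite \<Rightarrow> (real^'n)^'n \<Rightarrow> real^'n \<Rightarrow> real^'n^'n" where
  "Mrow i0 x y = (\<chi> j. if j = i0 then y else x$j - x$i0)"

definition Nv :: "'n::finite \<Rightarrow> (real^'n)^'n \<Rightarrow> real^'n" where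
  "Nv i0 x = (\<chi> k. det (Mrow i0 x (axis k 1)))"

lemma det_Mrow:
  fixes i0 :: "'n::finite" and x :: "(real^'n)^'n"
  shows "det (Mrow i0 x y) = inner (Nv i0 x) y"
proof -
  have "det (Mrow i0 x y) = det ((\<chi> j. if j = i0 then sum (\<lambda>k. (y$k) *s axis k 1) UNIV else x$j - x$i0) :: real^'n^'n)"
    unfolding Mrow_def basis_expansion ..
  also have "\<dots> = sum (\<lambda>k. det ((\<chi> j. if j = i0 then (y$k) *s axis k 1 else x$j - x$i0) :: real^'n^'n)) UNIV"
    by (rule det_linear_row_sum) simp
  also have "\<dots> = sum (\<lambda>k. y$k * det (Mrow i0 x (axis k 1))) UNIV"
    unfolding Mrow_def by (simp add: det_row_mul)
  also have "\<dots> = inner (Nv i0 x) y"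
    by (simp add: Nv_def inner_vec_def mult.commute)
  finally show ?thesis .
qed

lemma Nv_plane: "inner (Nv i0 x) (x$j) = inner (Nv i0 x) (x$i0)"
proof -
  have "det (Mrow i0 x (x$j - x$i0)) = 0"
  proof (cases "j = i0")
    case True
    then show ?thesis by (intro det_zero_row(1)[of i0]) (simp add: Mrow_def row_def vec_eq_iff)
  next
    case False
    then show ?thesis
      by (intro det_identical_rows[of j i0]) (auto simp: Mrow_def row_def vec_eq_iff)
  qed
  then show ?thesis by (simp add: det_Mrow inner_diff_right)
qed

lemma tendsto_det:
  fixes A :: "'b \<Rightarrow> real^'n::finite^'n"
  assumes "\<And>i j. ((\<lambda>t. A t $ i $ j) \<longlongrightarrow> B $ i $ j) F"
  shows "((\<lambda>t. det (A t)) \<longlongrightarrow> det B) F"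
  unfolding det_def by (intro tendsto_intros assms)

lemma tendsto_Nv:
  assumes "(xs \<longlongrightarrow> x) F"
  shows "((\<lambda>t. Nv i0 (xs t)) \<longlongrightarrow> Nv i0 x) F"
  unfolding Nv_def Mrow_def
  by (intro tendsto_intros tendsto_det) (auto intro!: tendsto_intros assms)



lemma det0_left_kernel: "det (A::real^'n::finite^'n) = 0 \<Longrightarrow> \<exists>c. c \<noteq> 0 \<and> c v* A = 0"
  by (metis det_eq_0_rank det_transpose less_irrefl_nat
    matrix_nonfull_linear_equations_eq transpose_matrix_vector)

lemma vmult_sum: "(c v* (A::real^'n::finite^'m::finite)) = (\<Sum>j\<in>UNIV. c$j *\<^sub>R A$j)"
  by (simp add: vec_eq_iff vector_matrix_mult_def sum_component mult.commute)

lemma no_affine_dep: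
  fixes K :: "'n::finite \<Rightarrow> (real^'n) set" and x :: "(real^'n)^'n"
  assumes xK: "\<forall>i. x$i \<in> K i"
    and sepK: "\<forall>\<sigma>::'n\<Rightarrow>bool. \<exists>v l. \<forall>i. \<forall>y\<in>K i. if \<sigma> i then inner y v > l else inner y v < l"
    and s1: "(\<Sum>j\<in>UNIV. lam j *\<^sub>R x$j) = 0" and s2: "(\<Sum>j\<in>UNIV. lam j) = 0" and j0: "lam j0 \<noteq> 0"
  shows False
proof -
  obtain v l where vl: "\<forall>i. \<forall>y\<in>K i. if lam i > 0 then inner y v > l else inner y v < l"
    using sepK[rule_format, of "\<lambda>i. lam i > 0"] by blast
  have pos: "lam j * (inner (x$j) v - l) > 0" if "lam j \<noteq> 0" for j
  proof (cases "lam j > 0")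
    case True
    then show ?thesis using vl xK by (metis diff_gt_0_iff_gt mult_pos_pos)
  next
    case False
    then have "lam j < 0" using that by simp
    moreover have "inner (x$j) v < l" using vl xK False by metis
    ultimately show ?thesis by (simp add: mult_neg_neg)
  qed
  have "0 < (\<Sum>j\<in>UNIV. lam j * (inner (x$j) v - l))"
    by (rule sum_pos2[of UNIV j0]) (use pos j0 in \<open>auto intro: less_imp_le\<close>, metis less_imp_le mult_zero_left order_refl pos)
  also have "\<dots> = inner (\<Sum>j\<in>UNIV. lam j *\<^sub>R x$j) v - l * (\<Sum>j\<in>UNIV. lam j)"
    by (simp add: inner_sum_left sum_subtractf right_diff_distrib sum_distrib_left mult.commute)
  also have "\<dots> = 0" using s1 s2 by simp
  finally show False by simp
qed

lemma Nv_nonzero: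
  fixes K :: "'n::finite \<Rightarrow> (real^'n) set" and x :: "(real^'n)^'n"
  assumes xK: "\<forall>i. x$i \<in> K i"
    and sepK: "\<forall>\<sigma>::'n\<Rightarrow>bool. \<exists>v l. \<forall>i. \<forall>y\<in>K i. if \<sigma> i then inner y v > l else inner y v < l"
  shows "Nv i0 x \<noteq> 0"
proof
  assume N0: "Nv i0 x = 0"
  define R where "R = (\<lambda>j. x$j - x$i0) ` (UNIV - {i0})"
  have "card R \<le> card (UNIV - {i0})" unfolding R_def by (rule card_image_le) simp
  also have "\<dots> < CARD('n)" by (simp add: card_Diff_singleton)
  finally have cR: "card R < CARD('n)" .
  have "span R \<noteq> UNIV"
  proof
    assume "span R = UNIV"
    then have "dim (span R) = CARD('n)" by simp
    then have "dim R = CARD('n)" by (simp add: dim_span)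
    moreover have "dim R \<le> card R" by (intro dim_le_card span_superset) (simp_all add: R_def)
    ultimately show False using cR by simp
  qed
  then obtain y where y: "y \<notin> span R" by blast
  have "det (Mrow i0 x y) = 0" using N0 by (simp add: det_Mrow)
  then obtain c where c: "c \<noteq> 0" "c v* Mrow i0 x y = 0" using det0_left_kernel by blast
  have eq: "(\<Sum>j\<in>UNIV. c$j *\<^sub>R (if j = i0 then y else x$j - x$i0)) = 0"
    using c(2) by (simp add: vmult_sum Mrow_def)
  define d where "d j = (if j = i0 then 0 else c$j)" for j
  have eqd: "(\<Sum>j\<in>UNIV. c$j *\<^sub>R (if j = i0 then y else x$j - x$i0)) =
      c$i0 *\<^sub>R y + (\<Sum>j\<in>UNIV. d j *\<^sub>R (x$j - x$i0))"
  proof -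
    have "(\<Sum>j\<in>UNIV. c$j *\<^sub>R (if j = i0 then y else x$j - x$i0)) =
        (\<Sum>j\<in>UNIV. (if j = i0 then c$i0 *\<^sub>R y else 0) + d j *\<^sub>R (x$j - x$i0))"
      by (rule sum.cong) (auto simp: d_def)
    also have "\<dots> = c$i0 *\<^sub>R y + (\<Sum>j\<in>UNIV. d j *\<^sub>R (x$j - x$i0))"
      by (simp add: sum.distrib)
    finally show ?thesis .
  qed
  have dspan: "(\<Sum>j\<in>UNIV. d j *\<^sub>R (x$j - x$i0)) \<in> span R"
  proof (intro span_sum)
    fix j show "d j *\<^sub>R (x$j - x$i0) \<in> span R"
    proof (cases "j = i0")
      case False
      then have "x$j - x$i0 \<in> R" by (auto simp: R_def)
      then show ?thesis by (intro span_mul span_base)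
    qed (simp add: d_def span_zero)
  qed
  have ci0: "c$i0 = 0"
  proof (rule ccontr)
    assume ne: "c$i0 \<noteq> 0"
    let ?S = "(\<Sum>j\<in>UNIV. d j *\<^sub>R (x$j - x$i0))"
    have h: "c$i0 *\<^sub>R y = - ?S" using eq[unfolded eqd] by (simp add: eq_neg_iff_add_eq_0)
    have "y = (1/c$i0) *\<^sub>R (c$i0 *\<^sub>R y)" using ne by simp
    also have "\<dots> = (1/c$i0) *\<^sub>R (- ?S)" using h by simp
    finally have yS: "y = (1/c$i0) *\<^sub>R (- ?S)" .
    have "(1/c$i0) *\<^sub>R (- ?S) \<in> span R" by (intro span_mul span_neg dspan)
    then have "y \<in> span R" using yS by simp
    then show False using y by simp
  qed
  then obtain j0 where j0: "d j0 \<noteq> 0" using c(1) by (metis d_def vec_eq_iff zero_index)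
  have sd: "(\<Sum>j\<in>UNIV. d j *\<^sub>R (x$j - x$i0)) = 0" using eq[unfolded eqd] ci0 by simp
  define lam where "lam j = d j - (if j = i0 then sum d UNIV else 0)" for j
  have s1: "(\<Sum>j\<in>UNIV. lam j *\<^sub>R x$j) = 0"
  proof -
    have "(\<Sum>j\<in>UNIV. lam j *\<^sub>R x$j) = (\<Sum>j\<in>UNIV. d j *\<^sub>R x$j) - sum d UNIV *\<^sub>R x$i0"
      by (simp add: lam_def scaleR_diff_left sum_subtractf if_distrib[where f="\<lambda>a. a *\<^sub>R _"] cong: if_cong)
    also have "\<dots> = (\<Sum>j\<in>UNIV. d j *\<^sub>R (x$j - x$i0))"
      by (simp add: scaleR_diff_right sum_subtractf scaleR_sum_left)
    finally show ?thesis using sd by simp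
  qed
  have s2: "(\<Sum>j\<in>UNIV. lam j) = 0" by (simp add: lam_def sum_subtractf)
  have "lam j0 \<noteq> 0" using j0 ci0 by (simp add: lam_def d_def split: if_splits)
  then show False using no_affine_dep[OF xK sepK s1 s2] by blast
qed



lemma core:
  fixes K :: "'n::finite \<Rightarrow> (real^'n) set" and G :: "'n \<Rightarrow> real^'n \<Rightarrow> real \<Rightarrow> real"
    and \<alpha> :: "'n \<Rightarrow> real"
  assumes Kc: "\<And>i. compact (K i)" and Kv: "\<And>i. convex (K i)" and Kne: "\<And>i. K i \<noteq> {}"
    and sepK: "\<forall>\<sigma>::'n\<Rightarrow>bool. \<exists>v l. \<forall>i. \<forall>y\<in>K i. if \<sigma> i then inner y v > l else inner y v < l"
    and Gcont: "\<And>i N l Ns ls. N \<noteq> 0 \<Longrightarrow> Ns \<longlonglongrightarrow> N \<Longrightarrow> ls \<longlonglongrightarrow> l \<Longrightarrow>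
                  (\<lambda>k. G i (Ns k) (ls k)) \<longlonglongrightarrow> G i N l"
    and Gmono: "\<And>i N l l'. N \<noteq> 0 \<Longrightarrow> l \<le> l' \<Longrightarrow> G i N l' \<le> G i N l"
    and Glev: "\<And>i N. N \<noteq> 0 \<Longrightarrow> \<exists>y\<in>K i. G i N (inner N y) = \<alpha> i"
  shows "\<exists>N l. N \<noteq> 0 \<and> (\<forall>i. G i N l = \<alpha> i) \<and> (\<forall>i. \<exists>y\<in>K i. inner N y = l)"
proof -
  define i0 :: 'n where "i0 = undefined"
  define X where "X = {x::(real^'n)^'n. \<forall>i. x$i \<in> K i}"
  define N where "N x = Nv i0 x" for x
  define L where "L x = inner (N x) (x$i0)" for x
  define F where "F i x = G i (N x) (L x) - \<alpha> i" for i x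
  define T where "T x = (\<chi> i. closest_point (K i) (x$i + F i x *\<^sub>R N x))" for x
  have Nnz: "N x \<noteq> 0" if "x \<in> X" for x
    unfolding N_def using that sepK by (intro Nv_nonzero[of x K]) (auto simp: X_def)
  have closedX: "closed X"
  proof -
    have "X = (\<Inter>i. (\<lambda>x. x$i) -` K i)" by (auto simp: X_def)
    moreover have "closed ((\<lambda>x::(real^'n)^'n. x$i) -` K i)" for i
      by (intro closed_vimage compact_imp_closed Kc) (auto intro!: continuous_intros)
    ultimately show ?thesis by auto
  qed
  have boundedX: "bounded X"
  proof -
    have "\<exists>B. \<forall>y\<in>K i. norm y \<le> B" for i
      using compact_imp_bounded[OF Kc] by (auto simp: bounded_iff)
    then obtain B where B: "\<And>i y. y \<in> K i \<Longrightarrow> norm y \<le> B i" by metis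
    have "norm x \<le> sum B UNIV" if "x \<in> X" for x
    proof -
      have "norm x \<le> sum (\<lambda>i. norm (x$i)) UNIV" unfolding norm_vec_def by (rule L2_set_le_sum) simp
      also have "\<dots> \<le> sum B UNIV" using that B by (intro sum_mono) (auto simp: X_def)
      finally show ?thesis .
    qed
    then show ?thesis by (auto simp: bounded_iff)
  qed
  have compactX: "compact X" using closedX boundedX by (simp add: compact_eq_bounded_closed)
  have convexX: "convex X"
    unfolding convex_def X_def
  proof (intro ballI allI impI, safe)
    fix x y :: "(real^'n)^'n" and u v :: real and i
    assume "\<forall>i. x $ i \<in> K i" "\<forall>i. y $ i \<in> K i" "0 \<le> u" "0 \<le> v" "u + v = 1"
    then show "(u *\<^sub>R x + v *\<^sub>R y) $ i \<in> K i" using Kv[of i] by (simp add: convexD)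
  qed
  have neX: "X \<noteq> {}"
  proof -
    have "(\<chi> i. SOME y. y \<in> K i) \<in> X" unfolding X_def using Kne by (simp add: some_in_eq)
    then show ?thesis by blast
  qed
  have contT: "continuous_on X T"
    unfolding continuous_on_sequentially
  proof (intro allI ballI impI, elim conjE)
    fix xs x assume xX: "x \<in> X" and xsX: "\<forall>n. xs n \<in> X" and lim: "xs \<longlonglongrightarrow> x"
    have NL: "(\<lambda>k. N (xs k)) \<longlonglongrightarrow> N x" unfolding N_def by (rule tendsto_Nv[OF lim])
    have LL: "(\<lambda>k. L (xs k)) \<longlonglongrightarrow> L x" unfolding L_def by (intro tendsto_inner NL tendsto_vec_nth lim)
    show "(T \<circ> xs) \<longlonglongrightarrow> T x"
      unfolding o_def T_def
    proof (intro tendsto_vec_lambda)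
      fix i
      have "(\<lambda>k. xs k $ i + F i (xs k) *\<^sub>R N (xs k)) \<longlonglongrightarrow> x $ i + F i x *\<^sub>R N x"
      proof -
        have Fl: "(\<lambda>k. F i (xs k)) \<longlonglongrightarrow> F i x"
          unfolding F_def by (intro tendsto_diff tendsto_const Gcont[OF Nnz[OF xX] NL LL])
        show ?thesis by (intro tendsto_add tendsto_vec_nth lim tendsto_scaleR Fl NL)
      qed
      then show "(\<lambda>k. closest_point (K i) (xs k $ i + F i (xs k) *\<^sub>R N (xs k))) \<longlonglongrightarrow>
                 closest_point (K i) (x $ i + F i x *\<^sub>R N x)"
        by (rule continuous_on_tendsto_compose[where s=UNIV, OF continuous_on_closest_point[OF Kv compact_imp_closed[OF Kc] Kne]]) auto
    qed
  qed
  have TX: "T \<in> X \<rightarrow> X"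
    unfolding T_def X_def using closest_point_in_set[OF compact_imp_closed[OF Kc] Kne] by auto
  obtain x where xX: "x \<in> X" and fx: "T x = x"
    using brouwer[OF compactX convexX neX contT TX] by blast
  have F0: "F i x = 0" for i
  proof -
    have cp: "closest_point (K i) (x$i + F i x *\<^sub>R N x) = x$i"
    proof -
      have "T x $ i = x $ i" using fx by simp
      then show ?thesis unfolding T_def by simp
    qed
    have dot: "F i x * inner (N x) (y - x$i) \<le> 0" if "y \<in> K i" for y
    proof -
      have "inner (x$i + F i x *\<^sub>R N x - x$i) (y - x$i) \<le> 0"
        using closest_point_dot[OF Kv compact_imp_closed[OF Kc] that, of "x$i + F i x *\<^sub>R N x"]
        unfolding cp .
      then show ?thesis by simp
    qed
    obtain y where y: "y \<in> K i" "G i (N x) (inner (N x) y) = \<alpha> i"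
      using Glev[OF Nnz[OF xX]] by blast
    have Lx: "inner (N x) (x$i) = L x" unfolding L_def N_def by (rule Nv_plane)
    show ?thesis
    proof (rule ccontr)
      assume "F i x \<noteq> 0"
      then consider "F i x > 0" | "F i x < 0" by linarith
      then show False
      proof cases
        case 1
        then have "inner (N x) (y - x$i) \<le> 0" using dot[OF y(1)]
          by (simp add: mult_le_0_iff)
        then have "inner (N x) y \<le> L x" using Lx by (simp add: inner_diff_right)
        then have "G i (N x) (L x) \<le> \<alpha> i" using Gmono[OF Nnz[OF xX], of "inner (N x) y" "L x" i] Gmono[OF Nnz[OF xX], of "L x" "inner (N x) y" i] y(2) by simp
        then show False using 1 by (simp add: F_def)
      next
        case 2
        then have "inner (N x) (y - x$i) \<ge> 0" using dot[OF y(1)]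
          by (simp add: mult_le_0_iff)
        then have "inner (N x) y \<ge> L x" using Lx by (simp add: inner_diff_right)
        then have "\<alpha> i \<le> G i (N x) (L x)" using Gmono[OF Nnz[OF xX], of "inner (N x) y" "L x" i] Gmono[OF Nnz[OF xX], of "L x" "inner (N x) y" i] y(2) by simp
        then show False using 2 by (simp add: F_def)
      qed
    qed
  qed
  show ?thesis
  proof (intro exI conjI allI)
    show "N x \<noteq> 0" by (rule Nnz[OF xX])
    show "G i (N x) (L x) = \<alpha> i" for i using F0[of i] by (simp add: F_def)
    show "\<exists>y\<in>K i. inner (N x) y = L x" for i
      using xX Nv_plane[of i0 x i] by (auto simp: X_def L_def N_def)
  qed
qed



lemma eps_step:
  fixes \<mu> :: "'n::finite \<Rightarrow> (real^'n) measure"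
    and \<alpha> :: "'n \<Rightarrow> real" and f :: "'n \<Rightarrow> real^'n \<Rightarrow> real^'n"
    and Kb :: "'n \<Rightarrow> (real^'n) set" and c :: "'n \<Rightarrow> real^'n"
  assumes cont: "\<And>i. continuous_prob_measure (\<mu> i)"
    and fmeas: "\<And>i v. v \<in> sphere 0 1 \<Longrightarrow>
                 measure (\<mu> i) (halfspace_plus v (inner v (f i v))) = \<alpha> i"
    and Kbc: "\<And>i. compact (Kb i)" and Kbv: "\<And>i. convex (Kb i)"
    and fK: "\<And>i v. v \<in> sphere 0 1 \<Longrightarrow> f i v \<in> Kb i"
    and cK: "\<And>i. c i \<in> Kb i"
    and sepb: "\<And>\<sigma>::'n\<Rightarrow>bool. \<exists>v l. \<forall>i. (\<forall>y\<in>Kb i. if \<sigma> i then inner y v \<ge> l else inner y v \<le> l)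
                   \<and> (if \<sigma> i then inner (c i) v > l else inner (c i) v < l)"
    and e: "0 < e" "e < 1"
  shows "\<exists>N l. N \<noteq> 0 \<and> (\<forall>i. measure (\<mu> i) (halfspace_plus N ((l - e * inner N (c i)) / (1 - e))) = \<alpha> i)
           \<and> (\<forall>i. \<exists>y\<in>Kb i. inner N (e *\<^sub>R c i + (1 - e) *\<^sub>R y) = l)"
proof -
  define K where "K i = (\<lambda>y. e *\<^sub>R c i + (1 - e) *\<^sub>R y) ` Kb i" for i
  define G where "G i N l = measure (\<mu> i) (halfspace_plus N ((l - e * inner N (c i)) / (1 - e)))" for i N l
  have "\<exists>N l. N \<noteq> 0 \<and> (\<forall>i. G i N l = \<alpha> i) \<and> (\<forall>i. \<exists>y\<in>K i. inner N y = l)"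
  proof (rule core)
    show "compact (K i)" for i unfolding K_def by (rule compact_affinity[OF Kbc])
    show "convex (K i)" for i unfolding K_def by (rule convex_affinity[OF Kbv])
    show "K i \<noteq> {}" for i unfolding K_def using cK by blast
    show "\<forall>\<sigma>::'n\<Rightarrow>bool. \<exists>v l. \<forall>i. \<forall>y\<in>K i. if \<sigma> i then inner y v > l else inner y v < l"
    proof
      fix \<sigma> :: "'n \<Rightarrow> bool"
      obtain v l where vl: "\<forall>i. (\<forall>y\<in>Kb i. if \<sigma> i then inner y v \<ge> l else inner y v \<le> l)
                   \<and> (if \<sigma> i then inner (c i) v > l else inner (c i) v < l)"
        using sepb by blast
      have "\<forall>i. \<forall>y\<in>K i. if \<sigma> i then inner y v > l else inner y v < l"
      proof (intro allI ballI)
        fix i y assume "y \<in> K i"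
        then obtain z where z: "z \<in> Kb i" "y = e *\<^sub>R c i + (1 - e) *\<^sub>R z" unfolding K_def by blast
        have iy: "inner y v - l = e * (inner (c i) v - l) + (1 - e) * (inner z v - l)"
          unfolding z(2) by (simp add: inner_add_left algebra_simps)
        show "if \<sigma> i then inner y v > l else inner y v < l"
        proof (cases "\<sigma> i")
          case True
          then have "inner (c i) v - l > 0" "inner z v - l \<ge> 0" using vl z(1) by (metis diff_gt_0_iff_gt, metis diff_ge_0_iff_ge)
          then have "e * (inner (c i) v - l) > 0" "(1 - e) * (inner z v - l) \<ge> 0" using e by auto
          then show ?thesis using True iy by simp
        next
          case False
          then have "inner (c i) v - l < 0" "inner z v - l \<le> 0" using vl z(1) by (metis diff_less_0_iff_less, metis diff_le_0_iff_le)
          then have "e * (inner (c i) v - l) < 0" "(1 - e) * (inner z v - l) \<le> 0" using e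
            by (auto simp: mult_pos_neg mult_nonneg_nonpos)
          then show ?thesis using False iy by simp
        qed
      qed
      then show "\<exists>v l. \<forall>i. \<forall>y\<in>K i. if \<sigma> i then inner y v > l else inner y v < l" by blast
    qed
    show "(\<lambda>k. G i (Ns k) (ls k)) \<longlonglongrightarrow> G i N l"
      if "N \<noteq> 0" "Ns \<longlonglongrightarrow> N" "ls \<longlonglongrightarrow> l" for i N l Ns ls
      unfolding G_def
    proof (rule hs_cont[OF cont that(1,2)])
      show "(\<lambda>k. (ls k - e * inner (Ns k) (c i)) / (1 - e)) \<longlonglongrightarrow> (l - e * inner N (c i)) / (1 - e)"
        by (intro tendsto_divide tendsto_diff tendsto_mult tendsto_const tendsto_inner that(2,3)) (use e in simp)
    qed
    show "G i N l' \<le> G i N l" if "N \<noteq> 0" "l \<le> l'" for i N l l'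
      unfolding G_def
    proof (rule hs_mono[OF cont])
      show "(l - e * inner N (c i)) / (1 - e) \<le> (l' - e * inner N (c i)) / (1 - e)"
        using that(2) e by (intro divide_right_mono) auto
    qed
    show "\<exists>y\<in>K i. G i N (inner N y) = \<alpha> i" if N: "N \<noteq> 0" for i N
    proof -
      define v where "v = (1 / norm N) *\<^sub>R N"
      have vs: "v \<in> sphere 0 1" using N by (simp add: v_def)
      have Nv: "N = norm N *\<^sub>R v" using N by (simp add: v_def)
      define y where "y = e *\<^sub>R c i + (1 - e) *\<^sub>R f i v"
      have yK: "y \<in> K i" unfolding y_def K_def using fK[OF vs] by blast
      have "(inner N y - e * inner N (c i)) / (1 - e) = inner N (f i v)"
        using e by (simp add: y_def inner_add_right)
      also have "\<dots> = norm N * inner v (f i v)" by (subst Nv) simp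
      finally have arg: "(inner N y - e * inner N (c i)) / (1 - e) = norm N * inner v (f i v)" .
      have "G i N (inner N y) = measure (\<mu> i) (halfspace_plus (norm N *\<^sub>R v) (norm N * inner v (f i v)))"
        unfolding G_def arg by (subst (1) Nv) simp
      also have "\<dots> = measure (\<mu> i) (halfspace_plus v (inner v (f i v)))"
        using N by (simp add: hs_scale)
      also have "\<dots> = \<alpha> i" by (rule fmeas[OF vs])
      finally show ?thesis using yK by blast
    qed
  qed
  then show ?thesis unfolding G_def K_def by blast
qed



theorem mainTheorem1:
  fixes \<mu> :: "'n::finite \<Rightarrow> (real^'n) measure"
    and \<alpha> :: "'n \<Rightarrow> real"
    and f :: "'n \<Rightarrow> real^'n \<Rightarrow> real^'n"
  assumes cont: "\<And>i. continuous_prob_measure (\<mu> i)"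
    and alpha: "\<And>i. 0 \<le> \<alpha> i \<and> \<alpha> i \<le> 1"
    and fmeas: "\<And>i v. v \<in> sphere 0 1 \<Longrightarrow>
                 measure (\<mu> i) (halfspace_plus v (inner v (f i v))) = \<alpha> i"
    and fbdd: "\<And>i. bounded (f i ` sphere 0 1)"
    and sep: "separable_by_hyperplanes (\<lambda>i. f i ` sphere 0 1)"
  shows "\<exists>v l. v \<noteq> 0 \<and> (\<forall>i. measure (\<mu> i) (halfspace_plus v l) = \<alpha> i)"
proof -
  define i0 :: 'n where "i0 = undefined"
  define u0 :: "real^'n" where "u0 = axis i0 1"
  have u0: "u0 \<in> sphere 0 1" by (simp add: u0_def)
  define S where "S i = f i ` sphere 0 1" for i
  define c where "c i = f i u0" for i
  define Kb where "Kb i = closure (convex hull (S i))" for i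
  have Kbc: "compact (Kb i)" for i
  proof -
    have "bounded (convex hull (S i))" unfolding S_def by (rule bounded_convex_hull[OF fbdd])
    then show ?thesis unfolding Kb_def using compact_closure by blast
  qed
  have Kbv: "convex (Kb i)" for i unfolding Kb_def by (rule convex_closure[OF convex_convex_hull])
  have SK: "S i \<subseteq> Kb i" for i unfolding Kb_def by (rule subset_trans[OF hull_subset closure_subset])
  have fK: "f i v \<in> Kb i" if "v \<in> sphere 0 1" for i v using SK[of i] that unfolding S_def by blast
  have cK: "c i \<in> Kb i" for i using fK[OF u0] by (simp add: c_def)
  have sepb: "\<exists>v l. \<forall>i. (\<forall>y\<in>Kb i. if \<sigma> i then inner y v \<ge> l else inner y v \<le> l)
                   \<and> (if \<sigma> i then inner (c i) v > l else inner (c i) v < l)" for \<sigma> :: "'n \<Rightarrow> bool"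
  proof -
    obtain v l where v: "v \<noteq> 0" and vl: "\<forall>i. S i \<subseteq> interior (if \<sigma> i then halfspace_plus v l else halfspace_minus v l)"
      using sep unfolding separable_by_hyperplanes_def S_def by blast
    have hp: "halfspace_plus v l = {x. v \<bullet> x \<ge> l}" by (auto simp: halfspace_plus_def inner_commute)
    have hm: "halfspace_minus v l = {x. v \<bullet> x \<le> l}" by (auto simp: halfspace_minus_def inner_commute)
    have "(\<forall>y\<in>Kb i. if \<sigma> i then inner y v \<ge> l else inner y v \<le> l)
                   \<and> (if \<sigma> i then inner (c i) v > l else inner (c i) v < l)" for i
    proof (cases "\<sigma> i")
      case True
      then have "S i \<subseteq> interior (halfspace_plus v l)" using vl[rule_format, of i] by simp
      then have Si: "S i \<subseteq> {x. v \<bullet> x > l}" using v unfolding hp by simp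
      have "Kb i \<subseteq> {x. v \<bullet> x \<ge> l}" unfolding Kb_def
        by (rule closure_minimal[OF hull_minimal]) (use Si in \<open>auto simp: convex_halfspace_ge closed_halfspace_ge\<close>)
      moreover have "c i \<in> S i" using u0 by (simp add: S_def c_def)
      ultimately show ?thesis using True Si by (auto simp: inner_commute)
    next
      case False
      then have "S i \<subseteq> interior (halfspace_minus v l)" using vl[rule_format, of i] by simp
      then have Si: "S i \<subseteq> {x. v \<bullet> x < l}" using v unfolding hm by simp
      have "Kb i \<subseteq> {x. v \<bullet> x \<le> l}" unfolding Kb_def
        by (rule closure_minimal[OF hull_minimal]) (use Si in \<open>auto simp: convex_halfspace_le closed_halfspace_le\<close>)
      moreover have "c i \<in> S i" using u0 by (simp add: S_def c_def)
      ultimately show ?thesis using False Si by (auto simp: inner_commute)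
    qed
    then show ?thesis by blast
  qed
  obtain B where B: "\<And>i y. y \<in> Kb i \<Longrightarrow> norm y \<le> B"
  proof -
    have "bounded (\<Union>i. Kb i)" by (rule bounded_UN) (simp_all add: compact_imp_bounded Kbc)
    then show ?thesis using that by (auto simp: bounded_iff)
  qed
  define eps where "eps k = inverse (real (Suc k)) / 2" for k
  have eps: "0 < eps k" "eps k < 1" for k
  proof -
    have "inverse (real (Suc k)) \<le> 1" by (simp add: inverse_le_1_iff)
    then show "0 < eps k" "eps k < 1" by (auto simp: eps_def)
  qed
  have epslim: "eps \<longlonglongrightarrow> 0"
    unfolding eps_def using tendsto_divide[OF LIMSEQ_inverse_real_of_nat tendsto_const[of 2]] by simp
  have "\<forall>k. \<exists>p. fst p \<noteq> 0 \<and> (\<forall>i. measure (\<mu> i) (halfspace_plus (fst p) ((snd p - eps k * inner (fst p) (c i)) / (1 - eps k))) = \<alpha> i)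
           \<and> (\<forall>i. \<exists>y\<in>Kb i. inner (fst p) (eps k *\<^sub>R c i + (1 - eps k) *\<^sub>R y) = snd p)"
    using eps_step[OF cont fmeas Kbc Kbv fK cK sepb eps] by auto
  from choice[OF this] obtain p where p0: "\<forall>k. fst (p k) \<noteq> 0 \<and> (\<forall>i. measure (\<mu> i) (halfspace_plus (fst (p k)) ((snd (p k) - eps k * inner (fst (p k)) (c i)) / (1 - eps k))) = \<alpha> i)
           \<and> (\<forall>i. \<exists>y\<in>Kb i. inner (fst (p k)) (eps k *\<^sub>R c i + (1 - eps k) *\<^sub>R y) = snd (p k))" by blast
  have p: "\<And>k. fst (p k) \<noteq> 0"
    "\<And>k i. measure (\<mu> i) (halfspace_plus (fst (p k)) ((snd (p k) - eps k * inner (fst (p k)) (c i)) / (1 - eps k))) = \<alpha> i"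
    "\<And>k i. \<exists>y\<in>Kb i. inner (fst (p k)) (eps k *\<^sub>R c i + (1 - eps k) *\<^sub>R y) = snd (p k)"
    using p0 by blast+
  define vv where "vv k = (1 / norm (fst (p k))) *\<^sub>R fst (p k)" for k
  define mm where "mm k = snd (p k) / norm (fst (p k))" for k
  have vvs: "vv k \<in> sphere 0 1" for k using p(1) by (simp add: vv_def)
  have val: "measure (\<mu> i) (halfspace_plus (vv k) ((mm k - eps k * inner (vv k) (c i)) / (1 - eps k))) = \<alpha> i" for k i
  proof -
    let ?N = "fst (p k)"
    have np: "norm ?N > 0" using p(1) by simp
    have Nv: "?N = norm ?N *\<^sub>R vv k" using p(1) by (simp add: vv_def)
    define t where "t = (mm k - eps k * inner (vv k) (c i)) / (1 - eps k)"
    have eqarg: "(snd (p k) - eps k * inner ?N (c i)) / (1 - eps k) = norm ?N * t"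
    proof -
      have "1 - eps k \<noteq> 0" using eps[of k] by simp
      then show ?thesis using np by (simp add: t_def mm_def vv_def field_simps)
    qed
    have "halfspace_plus ?N (norm ?N * t) = halfspace_plus (vv k) t"
      using hs_scale[OF np, of "vv k" t, folded Nv] .
    then have "measure (\<mu> i) (halfspace_plus (vv k) ((mm k - eps k * inner (vv k) (c i)) / (1 - eps k)))
        = measure (\<mu> i) (halfspace_plus ?N ((snd (p k) - eps k * inner ?N (c i)) / (1 - eps k)))"
      unfolding eqarg t_def by simp
    then show ?thesis using p(2) by simp
  qed
  have mmB: "mm k \<in> cball 0 B" for k
  proof -
    obtain y where y: "y \<in> Kb i0" "inner (fst (p k)) (eps k *\<^sub>R c i0 + (1 - eps k) *\<^sub>R y) = snd (p k)"
      using p(3) by blast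
    define z where "z = eps k *\<^sub>R c i0 + (1 - eps k) *\<^sub>R y"
    have "norm z \<le> norm (eps k *\<^sub>R c i0) + norm ((1 - eps k) *\<^sub>R y)"
      unfolding z_def by (rule norm_triangle_ineq)
    also have "\<dots> = eps k * norm (c i0) + (1 - eps k) * norm y"
      using eps[of k] by simp
    also have "\<dots> \<le> eps k * B + (1 - eps k) * B"
      using eps[of k] B[OF cK] B[OF y(1)] by (intro add_mono mult_left_mono) auto
    finally have zB: "norm z \<le> B" by (simp add: algebra_simps)
    have "mm k = inner (vv k) z" using y(2) by (simp add: mm_def vv_def z_def)
    then have "\<bar>mm k\<bar> \<le> norm (vv k) * norm z" using Cauchy_Schwarz_ineq2 by simp
    then have "\<bar>mm k\<bar> \<le> B" using vvs[of k] zB by simp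
    then show ?thesis by (simp add: dist_norm)
  qed
  have "compact (sphere (0::real^'n) 1 \<times> cball (0::real) B)" by (intro compact_Times compact_sphere compact_cball)
  then have "seq_compact (sphere (0::real^'n) 1 \<times> cball (0::real) B)" by (rule compact_imp_seq_compact)
  moreover have "\<forall>k. (vv k, mm k) \<in> sphere 0 1 \<times> cball 0 B" using vvs mmB by simp
  ultimately obtain q r where q: "q \<in> sphere (0::real^'n) 1 \<times> cball (0::real) B" and r: "strict_mono r"
    and lim: "((\<lambda>k. (vv k, mm k)) \<circ> r) \<longlonglongrightarrow> q"
    by (rule seq_compactE)
  define v where "v = fst q"
  define m where "m = snd q"
  have vlim: "(\<lambda>k. vv (r k)) \<longlonglongrightarrow> v" using tendsto_fst[OF lim] by (simp add: v_def o_def)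
  have mlim: "(\<lambda>k. mm (r k)) \<longlonglongrightarrow> m" using tendsto_snd[OF lim] by (simp add: m_def o_def)
  have elim: "(\<lambda>k. eps (r k)) \<longlonglongrightarrow> 0" using LIMSEQ_subseq_LIMSEQ[OF epslim r] by (simp add: o_def)
  have v0: "v \<noteq> 0" using q by (auto simp: v_def)
  have "measure (\<mu> i) (halfspace_plus v m) = \<alpha> i" for i
  proof -
    have tl: "(\<lambda>k. (mm (r k) - eps (r k) * inner (vv (r k)) (c i)) / (1 - eps (r k)))
              \<longlonglongrightarrow> (m - 0 * inner v (c i)) / (1 - 0)"
      by (intro tendsto_divide tendsto_diff tendsto_mult tendsto_const tendsto_inner mlim elim vlim) simp
    have "(\<lambda>k. measure (\<mu> i) (halfspace_plus (vv (r k)) ((mm (r k) - eps (r k) * inner (vv (r k)) (c i)) / (1 - eps (r k)))))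
          \<longlonglongrightarrow> measure (\<mu> i) (halfspace_plus v m)"
      using hs_cont[OF cont v0 vlim tl] by simp
    then have "(\<lambda>k. \<alpha> i) \<longlonglongrightarrow> measure (\<mu> i) (halfspace_plus v m)" by (simp add: val)
    from LIMSEQ_unique[OF tendsto_const this] show ?thesis by simp
  qed
  then show ?thesis using v0 by blast
qed


end
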